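(* For each integer $p>2$, there exists a connected $(7p-3)$-regular integral graph with $12p$ vertices.
   Context: A graph is integral if all eigenvalues of its adjacency matrix are integers. *)

theory Defs
  imports Complex_Main "Jordan_Normal_Form.Char_Poly"
begin

text \<open>Finite simple graphs on the vertex set {0..<n}, given by an edge relation E
  (only its restriction to {0..<n} matters).\<close>

definition simple_graph :: "nat \<Rightarrow> (nat \<Rightarrow> nat \<Rightarrow> bool) \<Rightarrow> bool" where
  "simple_graph n E \<longleftrightarrow> (\<forall>i<n. \<forall>j<n. E i j \<longleftrightarrow> E j i) \<and> (\<forall>i<n. \<not> E i i)"

definition adj_matrix :: "nat \<Rightarrow> (nat \<Rightarrow> nat \<Rightarrow> bool) \<Rightarrow> complex mat" where
  "adj_matrix n E = mat n n (\<lambda>(i, j). if E i j then 1 else 0)"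

definition integral_graph :: "nat \<Rightarrow> (nat \<Rightarrow> nat \<Rightarrow> bool) \<Rightarrow> bool" where
  "integral_graph n E \<longleftrightarrow> (\<forall>k. eigenvalue (adj_matrix n E) k \<longrightarrow> k \<in> \<int>)"

definition regular_graph :: "nat \<Rightarrow> (nat \<Rightarrow> nat \<Rightarrow> bool) \<Rightarrow> nat \<Rightarrow> bool" where
  "regular_graph n E d \<longleftrightarrow> (\<forall>i<n. card {j. j < n \<and> E i j} = d)"

definition connected_graph :: "nat \<Rightarrow> (nat \<Rightarrow> nat \<Rightarrow> bool) \<Rightarrow> bool" where
  "connected_graph n E \<longleftrightarrow>
     (\<forall>i<n. \<forall>j<n. (\<lambda>x y. x < n \<and> y < n \<and> E x y)\<^sup>*\<^sup>* i j)"

end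

theory Submission imports Defs begin
lemma sum_split_mult:
  fixes f :: "nat \<Rightarrow> 'a::comm_monoid_add"
  shows "(\<Sum>j<n*m. f j) = (\<Sum>y<n. \<Sum>u<m. f (y*m+u))"
proof (induction n)
  case 0 then show ?case by simp
next
  case (Suc n)
  have "{..<Suc n * m} = {..<n*m} \<union> {n*m..<n*m+m}" by auto
  then have "(\<Sum>j<Suc n*m. f j) = (\<Sum>j<n*m. f j) + (\<Sum>j\<in>{n*m..<n*m+m}. f j)"
    by (metis finite_atLeastLessThan finite_lessThan sum.union_disjoint ivl_disj_int_one(2) lessThan_atLeast0)
  also have "(\<Sum>j\<in>{n*m..<n*m+m}. f j) = (\<Sum>u<m. f (n*m+u))"
    using sum.shift_bounds_nat_ivl[of f 0 "n*m" m] by (simp add: atLeast0LessThan add.commute)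
  finally show ?case using Suc by simp
qed

definition ev :: "nat \<Rightarrow> (nat \<Rightarrow> nat \<Rightarrow> complex) \<Rightarrow> complex \<Rightarrow> bool" where
  "ev n K k \<longleftrightarrow> (\<exists>v. (\<exists>i<n. v i \<noteq> 0) \<and> (\<forall>i<n. (\<Sum>j<n. K i j * v j) = k * v i))"

definition intev :: "nat \<Rightarrow> (nat \<Rightarrow> nat \<Rightarrow> complex) \<Rightarrow> bool" where
  "intev n K \<longleftrightarrow> (\<forall>k. ev n K k \<longrightarrow> k \<in> \<int>)"

lemma peel:
  assumes e: "ev (n*m) K k" and m: "m > 0"
  and K: "\<And>i j. i < n*m \<Longrightarrow> j < n*m \<Longrightarrow> K i j =
      (if i mod m = j mod m then X (i div m) (j div m) else 0) + Y (i div m) (j div m)"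
  shows "ev n X k \<or> ev n (\<lambda>x y. X x y + of_nat m * Y x y) k"
proof -
  obtain v where v0: "\<exists>i<n*m. v i \<noteq> 0" and ve: "\<And>i. i<n*m \<Longrightarrow> (\<Sum>j<n*m. K i j * v j) = k * v i"
    using e unfolding ev_def by blast
  define \<sigma> where "\<sigma> x = (\<Sum>u<m. v (x*m+u))" for x
  have idx: "x*m+t < n*m" if "x<n" "t<m" for x t
  proof -
    have "x*m+t < x*m+m" using that by simp
    also have "\<dots> = Suc x * m" by simp
    also have "\<dots> \<le> n*m" using that by (intro mult_le_mono1) simp
    finally show ?thesis .
  qed
  have dm: "(x*m+t) div m = x" "(x*m+t) mod m = t" if "t<m" for x t
    using that m by auto
  have row: "k * v (x*m+t) = (\<Sum>y<n. X x y * v (y*m+t)) + (\<Sum>y<n. Y x y * \<sigma> y)"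
    if "x<n" "t<m" for x t
  proof -
    have "k * v (x*m+t) = (\<Sum>y<n. \<Sum>u<m. K (x*m+t) (y*m+u) * v (y*m+u))"
      using ve[OF idx[OF that]] sum_split_mult[of "\<lambda>j. K (x*m+t) j * v j" n m] by simp
    also have "\<dots> = (\<Sum>y<n. \<Sum>u<m. ((if t = u then X x y else 0) + Y x y) * v (y*m+u))"
      by (intro sum.cong refl, subst K) (auto simp: idx that dm)
    also have "\<dots> = (\<Sum>y<n. X x y * v (y*m+t) + Y x y * \<sigma> y)"
    proof (intro sum.cong refl)
      fix y assume "y \<in> {..<n}"
      have "(\<Sum>u<m. ((if t = u then X x y else 0) + Y x y) * v (y*m+u))
          = (\<Sum>u<m. (if t = u then X x y * v (y*m+u) else 0)) + (\<Sum>u<m. Y x y * v (y*m+u))"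
        by (subst sum.distrib[symmetric], intro sum.cong refl) (auto simp: distrib_right)
      also have "\<dots> = X x y * v (y*m+t) + Y x y * \<sigma> y"
        using that by (simp add: \<sigma>_def sum_distrib_left sum.delta)
      finally show "(\<Sum>u<m. ((if t = u then X x y else 0) + Y x y) * v (y*m+u)) = X x y * v (y*m+t) + Y x y * \<sigma> y" .
    qed
    finally show ?thesis by (simp add: sum.distrib)
  qed
  show ?thesis
  proof (cases "\<exists>x<n. \<sigma> x \<noteq> 0")
    case True
    have "ev n (\<lambda>x y. X x y + of_nat m * Y x y) k"
      unfolding ev_def
    proof (intro exI[of _ \<sigma>] conjI allI impI)
      show "\<exists>x<n. \<sigma> x \<noteq> 0" by fact
      fix x assume x: "x<n"
      have "k * \<sigma> x = (\<Sum>t<m. (\<Sum>y<n. X x y * v (y*m+t)) + (\<Sum>y<n. Y x y * \<sigma> y))"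
      proof -
        have "k * \<sigma> x = (\<Sum>t<m. k * v (x*m+t))" by (simp add: \<sigma>_def sum_distrib_left)
        also have "\<dots> = (\<Sum>t<m. (\<Sum>y<n. X x y * v (y*m+t)) + (\<Sum>y<n. Y x y * \<sigma> y))"
          by (intro sum.cong refl) (simp add: row x)
        finally show ?thesis .
      qed
      also have "\<dots> = (\<Sum>y<n. X x y * \<sigma> y) + of_nat m * (\<Sum>y<n. Y x y * \<sigma> y)"
        by (simp add: sum.distrib \<sigma>_def sum_distrib_left sum.swap[of _ "{..<m}"])
      also have "\<dots> = (\<Sum>y<n. (X x y + of_nat m * Y x y) * \<sigma> y)"
        by (simp add: distrib_right sum.distrib sum_distrib_left mult.assoc)
      finally show "(\<Sum>y<n. (X x y + of_nat m * Y x y) * \<sigma> y) = k * \<sigma> x" by simp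
    qed
    then show ?thesis by blast
  next
    case False
    then have s0: "\<And>x. x<n \<Longrightarrow> \<sigma> x = 0" by blast
    obtain i0 where i0: "i0 < n*m" "v i0 \<noteq> 0" using v0 by blast
    define t where "t = i0 mod m"
    have t: "t < m" using m by (simp add: t_def)
    have x0: "i0 div m < n" using i0(1) m by (simp add: less_mult_imp_div_less)
    have "ev n X k"
      unfolding ev_def
    proof (intro exI[of _ "\<lambda>y. v (y*m+t)"] conjI allI impI)
      show "\<exists>x<n. v (x*m+t) \<noteq> 0" using x0 i0(2) by (intro exI[of _ "i0 div m"]) (simp add: t_def)
      fix x assume x: "x<n"
      show "(\<Sum>y<n. X x y * v (y*m+t)) = k * v (x*m+t)"
        using row[OF x t] s0 by simp
    qed
    then show ?thesis by blast
  qed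
qed

lemma intev_peel:
  assumes m: "m > 0"
  and K: "\<And>i j. i < n*m \<Longrightarrow> j < n*m \<Longrightarrow> K i j =
      (if i mod m = j mod m then X (i div m) (j div m) else 0) + Y (i div m) (j div m)"
  and "intev n X" and "intev n (\<lambda>x y. X x y + of_nat m * Y x y)"
  shows "intev (n*m) K"
  using peel[OF _ m K] assms(3,4) unfolding intev_def by blast

lemma intev_1:
  assumes "K 0 0 \<in> \<int>" shows "intev 1 K"
  unfolding intev_def ev_def
proof (intro allI impI)
  fix k assume "\<exists>v. (\<exists>i<1. v i \<noteq> 0) \<and> (\<forall>i<1. (\<Sum>j<1. K i j * v j) = k * v i)"
  then obtain v where "v 0 \<noteq> 0" "K 0 0 * v 0 = k * v 0" by auto
  then have "k = K 0 0" by simp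
  then show "k \<in> \<int>" using assms by simp
qed

definition L1 :: "(bool \<Rightarrow> complex) \<Rightarrow> nat \<Rightarrow> nat \<Rightarrow> complex" where
  "L1 g x y = g (x = y)"
definition L2 :: "(bool \<Rightarrow> bool \<Rightarrow> complex) \<Rightarrow> nat \<Rightarrow> nat \<Rightarrow> complex" where
  "L2 g x y = g (x div 2 = y div 2) (x mod 2 = y mod 2)"
definition L3 :: "(bool \<Rightarrow> bool \<Rightarrow> bool \<Rightarrow> complex) \<Rightarrow> nat \<Rightarrow> nat \<Rightarrow> complex" where
  "L3 g x y = g (x div 3 div 2 = y div 3 div 2) (x div 3 mod 2 = y div 3 mod 2) (x mod 3 = y mod 3)"
definition L4 :: "nat \<Rightarrow> (bool \<Rightarrow> bool \<Rightarrow> bool \<Rightarrow> bool \<Rightarrow> complex) \<Rightarrow> nat \<Rightarrow> nat \<Rightarrow> complex" where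
  "L4 p g i j = L3 (\<lambda>a b c. g a b c (i mod p = j mod p)) (i div p) (j div p)"

lemma intev_L1: assumes "\<And>a. g a \<in> \<int>" shows "intev 2 (L1 g)"
proof -
  have "intev (1*2) (L1 g)"
  proof (rule intev_peel[where X="\<lambda>_ _. g True - g False" and Y="\<lambda>_ _. g False"])
    fix i j :: nat assume "i < 1*2" "j < 1*2"
    then show "L1 g i j = (if i mod 2 = j mod 2 then g True - g False else 0) + g False"
      by (auto simp: L1_def)
  next
    show "intev 1 (\<lambda>_ _. g True - g False)" by (rule intev_1) (simp add: assms)
  next
    show "intev 1 (\<lambda>x y. g True - g False + of_nat 2 * g False)" by (rule intev_1) (simp add: assms)
  qed simp
  then show ?thesis by simp
qed

lemma intev_L2: assumes "\<And>a b. g a b \<in> \<int>" shows "intev 4 (L2 g)"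
proof -
  have "intev (2*2) (L2 g)"
  proof (rule intev_peel[where X="L1 (\<lambda>a. g a True - g a False)" and Y="L1 (\<lambda>a. g a False)"])
    fix i j :: nat assume "i < 2*2" "j < 2*2"
    then show "L2 g i j = (if i mod 2 = j mod 2 then L1 (\<lambda>a. g a True - g a False) (i div 2) (j div 2) else 0) + L1 (\<lambda>a. g a False) (i div 2) (j div 2)"
      by (auto simp: L1_def L2_def)
  next
    show "intev 2 (L1 (\<lambda>a. g a True - g a False))" by (rule intev_L1) (simp add: assms)
  next
    have "(\<lambda>x y. L1 (\<lambda>a. g a True - g a False) x y + of_nat 2 * L1 (\<lambda>a. g a False) x y)
       = L1 (\<lambda>a. g a True - g a False + of_nat 2 * g a False)" by (simp add: L1_def fun_eq_iff)
    moreover have "intev 2 (L1 (\<lambda>a. g a True - g a False + of_nat 2 * g a False))"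
      by (rule intev_L1) (simp add: assms)
    ultimately show "intev 2 (\<lambda>x y. L1 (\<lambda>a. g a True - g a False) x y + of_nat 2 * L1 (\<lambda>a. g a False) x y)" by simp
  qed simp
  then show ?thesis by simp
qed

lemma intev_L3: assumes "\<And>a b c. g a b c \<in> \<int>" shows "intev 12 (L3 g)"
proof -
  have "intev (4*3) (L3 g)"
  proof (rule intev_peel[where X="L2 (\<lambda>a b. g a b True - g a b False)" and Y="L2 (\<lambda>a b. g a b False)"])
    fix i j :: nat assume "i < 4*3" "j < 4*3"
    then show "L3 g i j = (if i mod 3 = j mod 3 then L2 (\<lambda>a b. g a b True - g a b False) (i div 3) (j div 3) else 0) + L2 (\<lambda>a b. g a b False) (i div 3) (j div 3)"
      by (auto simp: L2_def L3_def)
  next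
    show "intev 4 (L2 (\<lambda>a b. g a b True - g a b False))" by (rule intev_L2) (simp add: assms)
  next
    have "(\<lambda>x y. L2 (\<lambda>a b. g a b True - g a b False) x y + of_nat 3 * L2 (\<lambda>a b. g a b False) x y)
       = L2 (\<lambda>a b. g a b True - g a b False + of_nat 3 * g a b False)" by (simp add: L2_def fun_eq_iff)
    moreover have "intev 4 (L2 (\<lambda>a b. g a b True - g a b False + of_nat 3 * g a b False))"
      by (rule intev_L2) (simp add: assms)
    ultimately show "intev 4 (\<lambda>x y. L2 (\<lambda>a b. g a b True - g a b False) x y + of_nat 3 * L2 (\<lambda>a b. g a b False) x y)" by simp
  qed simp
  then show ?thesis by simp
qed

lemma intev_L4: assumes "\<And>a b c d. g a b c d \<in> \<int>" and p: "p > 0" shows "intev (12*p) (L4 p g)"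
proof (rule intev_peel[where X="L3 (\<lambda>a b c. g a b c True - g a b c False)" and Y="L3 (\<lambda>a b c. g a b c False)"])
  fix i j :: nat assume "i < 12*p" "j < 12*p"
  then show "L4 p g i j = (if i mod p = j mod p then L3 (\<lambda>a b c. g a b c True - g a b c False) (i div p) (j div p) else 0) + L3 (\<lambda>a b c. g a b c False) (i div p) (j div p)"
    by (auto simp: L3_def L4_def)
next
  show "intev 12 (L3 (\<lambda>a b c. g a b c True - g a b c False))" by (rule intev_L3) (simp add: assms)
next
  have "(\<lambda>x y. L3 (\<lambda>a b c. g a b c True - g a b c False) x y + of_nat p * L3 (\<lambda>a b c. g a b c False) x y)
     = L3 (\<lambda>a b c. g a b c True - g a b c False + of_nat p * g a b c False)" by (simp add: L3_def fun_eq_iff)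
  moreover have "intev 12 (L3 (\<lambda>a b c. g a b c True - g a b c False + of_nat p * g a b c False))"
    by (rule intev_L3) (simp add: assms)
  ultimately show "intev 12 (\<lambda>x y. L3 (\<lambda>a b c. g a b c True - g a b c False) x y + of_nat p * L3 (\<lambda>a b c. g a b c False) x y)" by simp
qed (use p in simp)


definition Eg :: "bool \<Rightarrow> bool \<Rightarrow> bool \<Rightarrow> bool \<Rightarrow> bool" where
  "Eg ea eb ec es = (if es then (\<not>ea \<and> eb \<and> ec) \<or> (ea \<and> \<not>eb \<and> ec) \<or> (ea \<and> eb \<and> \<not>ec)
                     else (ea \<and> eb \<and> ec) \<or> (\<not>ec \<and> (ea \<or> eb)))"

definition Gr :: "nat \<Rightarrow> nat \<Rightarrow> nat \<Rightarrow> bool" where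
  "Gr p i j = Eg (i div p div 3 div 2 = j div p div 3 div 2) (i div p div 3 mod 2 = j div p div 3 mod 2)
                 (i div p mod 3 = j div p mod 3) (i mod p = j mod p)"

lemma Gr_simple: "simple_graph n (Gr p)"
proof -
  have "Gr p i j = Gr p j i" for i j unfolding Gr_def by (simp only: eq_commute[of "j div p div 3 div 2"] eq_commute[of "j div p div 3 mod 2"] eq_commute[of "j div p mod 3"] eq_commute[of "j mod p"])
  moreover have "\<not> Gr p i i" for i unfolding Gr_def Eg_def by simp
  ultimately show ?thesis unfolding simple_graph_def by blast
qed

lemma Gr_L4: "(if Gr p i j then 1 else 0) = L4 p (\<lambda>a b c d. if Eg a b c d then 1 else 0) i j"
  unfolding Gr_def L4_def L3_def by simp

lemma Gr_integral: assumes "p > 0" shows "integral_graph (12*p) (Gr p)"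
  unfolding integral_graph_def
proof (intro allI impI)
  fix k assume "eigenvalue (adj_matrix (12*p) (Gr p)) k"
  then obtain v where v: "v \<in> carrier_vec (12*p)" "v \<noteq> 0\<^sub>v (12*p)"
    "adj_matrix (12*p) (Gr p) *\<^sub>v v = k \<cdot>\<^sub>v v"
    unfolding eigenvalue_def eigenvector_def adj_matrix_def by auto
  have "ev (12*p) (L4 p (\<lambda>a b c d. if Eg a b c d then 1 else 0)) k"
    unfolding ev_def
  proof (intro exI[of _ "\<lambda>i. v $ i"] conjI allI impI)
    show "\<exists>i<12*p. v $ i \<noteq> 0" using v(1,2) by (auto simp: vec_eq_iff)
    fix i assume i: "i < 12*p"
    have "(adj_matrix (12*p) (Gr p) *\<^sub>v v) $ i = (k \<cdot>\<^sub>v v) $ i" using v(3) by simp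
    then show "(\<Sum>j<12*p. L4 p (\<lambda>a b c d. if Eg a b c d then 1 else 0) i j * v $ j) = k * v $ i"
      using i v(1) by (simp add: adj_matrix_def scalar_prod_def Gr_L4[symmetric] lessThan_atLeast0 row_def)
  qed
  moreover have "intev (12*p) (L4 p (\<lambda>a b c d. if Eg a b c d then 1 else 0))"
    by (rule intev_L4) (use assms in auto)
  ultimately show "k \<in> \<int>" unfolding intev_def by blast
qed

lemma inner_count:
  assumes "si < p"
  shows "(\<Sum>s<p. (if P (si = s) then 1 else 0::nat)) = (if P True then 1 else 0) + (p - 1) * (if P False then 1 else 0)"
proof -
  have "(\<Sum>s<p. (if P (si = s) then 1 else 0::nat)) = (if P True then 1 else 0) + (\<Sum>s\<in>{..<p}-{si}. (if P (si = s) then 1 else 0::nat))"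
    using assms by (subst sum.remove[of _ si]) auto
  also have "(\<Sum>s\<in>{..<p}-{si}. (if P (si = s) then 1 else 0::nat)) = (\<Sum>s\<in>{..<p}-{si}. (if P False then 1 else 0))"
    by (intro sum.cong) auto
  also have "\<dots> = (p - 1) * (if P False then 1 else 0)" using assms by simp
  finally show ?thesis .
qed

lemma lt12: "((xi::nat) < 12) = (xi = 0 \<or> xi = 1 \<or> xi = 2 \<or> xi = 3 \<or> xi = 4 \<or> xi = 5 \<or> xi = 6 \<or> xi = 7 \<or> xi = 8 \<or> xi = 9 \<or> xi = 10 \<or> xi = 11)"
  by arith

lemma outer_T: "(xi::nat) < 12 \<Longrightarrow> (\<Sum>x<12. (if Eg (xi div 3 div 2 = x div 3 div 2) (xi div 3 mod 2 = x div 3 mod 2) (xi mod 3 = x mod 3) True then 1 else 0::nat)) = 4"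
  apply (simp only: lt12)
  apply (elim disjE; simp add: Eg_def lessThan_nat_numeral)
  done

lemma outer_F: "(xi::nat) < 12 \<Longrightarrow> (\<Sum>x<12. (if Eg (xi div 3 div 2 = x div 3 div 2) (xi div 3 mod 2 = x div 3 mod 2) (xi mod 3 = x mod 3) False then 1 else 0::nat)) = 7"
  apply (simp only: lt12)
  apply (elim disjE; simp add: Eg_def lessThan_nat_numeral)
  done

lemma Gr_regular: assumes p: "p > 2" shows "regular_graph (12*p) (Gr p) (7*p - 3)"
  unfolding regular_graph_def
proof (intro allI impI)
  fix i assume i: "i < 12*p"
  let ?xi = "i div p" and ?si = "i mod p"
  have xi: "?xi < 12" using i by (simp add: less_mult_imp_div_less mult.commute)
  have si: "?si < p" using p by simp
  let ?h = "\<lambda>x e. (if Eg (?xi div 3 div 2 = x div 3 div 2) (?xi div 3 mod 2 = x div 3 mod 2) (?xi mod 3 = x mod 3) e then 1 else 0::nat)"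
  have "card {j. j < 12*p \<and> Gr p i j} = (\<Sum>j<12*p. if Gr p i j then 1 else 0)"
  proof -
    have "{j. j < 12*p \<and> Gr p i j} = {j\<in>{..<12*p}. Gr p i j}" by auto
    then show ?thesis by (simp add: sum.inter_filter[symmetric])
  qed
  also have "\<dots> = (\<Sum>x<12. \<Sum>s<p. if Gr p i (x*p+s) then 1 else 0)"
    by (rule sum_split_mult)
  also have "\<dots> = (\<Sum>x<12. \<Sum>s<p. ?h x (?si = s))"
    using p by (intro sum.cong refl) (simp add: Gr_def)
  also have "\<dots> = (\<Sum>x<12. ?h x True + (p - 1) * ?h x False)"
    by (intro sum.cong refl inner_count si)
  also have "\<dots> = 4 + (p - 1) * 7"
    using outer_T[OF xi] outer_F[OF xi] by (simp add: sum.distrib sum_distrib_left[symmetric])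
  also have "\<dots> = 7*p - 3" using p by simp
  finally show "card {j. j < 12*p \<and> Gr p i j} = 7*p - 3" .
qed

definition enc :: "nat \<Rightarrow> nat \<Rightarrow> nat \<Rightarrow> nat \<Rightarrow> nat \<Rightarrow> nat" where
  "enc p a b c s = ((a*2+b)*3+c)*p+s"

lemma enc_lt: assumes "a<2" "b<2" "c<3" "s<p" shows "enc p a b c s < 12*p"
proof -
  have "a*2+b \<le> 3" using assms by linarith
  then have "(a*2+b)*3 \<le> 9" by simp
  then have "(a*2+b)*3+c \<le> 11" using assms by linarith
  then have "((a*2+b)*3+c)*p \<le> 11*p" by (rule mult_le_mono1)
  then show ?thesis using assms unfolding enc_def by linarith
qed

lemma aux3: "(c::nat) < 3 \<Longrightarrow> (x*3+c) mod 3 = c" by simp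

lemma enc_dec: assumes "s<p" "c<3" "b<2"
  shows "enc p a b c s div p div 3 div 2 = a" "enc p a b c s div p div 3 mod 2 = b"
        "enc p a b c s div p mod 3 = c" "enc p a b c s mod p = s"
proof -
  have e1: "enc p a b c s div p = (a*2+b)*3+c" "enc p a b c s mod p = s" using assms by (auto simp: enc_def)
  have e2: "((a*2+b)*3+c) div 3 = a*2+b" using assms by auto
  have e2': "((a*2+b)*3+c) mod 3 = c" by (rule aux3) (use assms in simp)
  have e3: "(a*2+b) div 2 = a" "(a*2+b) mod 2 = b" using assms by auto
  show "enc p a b c s div p div 3 div 2 = a" "enc p a b c s div p div 3 mod 2 = b"
        "enc p a b c s div p mod 3 = c" "enc p a b c s mod p = s"
    unfolding e1 e2 e2' e3 by simp_all
qed

lemma Gr_enc: assumes "s<p" "c<3" "b<2" "s'<p" "c'<3" "b'<2"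
  shows "Gr p (enc p a b c s) (enc p a' b' c' s') = Eg (a=a') (b=b') (c=c') (s=s')"
  unfolding Gr_def enc_dec[OF assms(1-3)] enc_dec[OF assms(4-6)] ..

lemma dec_enc: assumes "p>0" shows "enc p (i div p div 3 div 2) (i div p div 3 mod 2) (i div p mod 3) (i mod p) = i"
proof -
  have "(i div p div 3 div 2 * 2 + i div p div 3 mod 2) = i div p div 3" by simp
  then have "(i div p div 3 div 2 * 2 + i div p div 3 mod 2) * 3 + i div p mod 3 = i div p" by simp
  then show ?thesis unfolding enc_def by simp
qed

lemma Gr_connected: assumes p: "p > 0" shows "connected_graph (12*p) (Gr p)"
  unfolding connected_graph_def
proof (intro allI impI)
  let ?R = "\<lambda>x y. x < 12*p \<and> y < 12*p \<and> Gr p x y"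
  have step: "?R\<^sup>*\<^sup>* (enc p a b c s) (enc p a' b' c' s')"
    if "Eg (a=a') (b=b') (c=c') (s=s') \<or> (a=a' \<and> b=b' \<and> c=c' \<and> s=s')"
       "a<2" "b<2" "c<3" "s<p" "a'<2" "b'<2" "c'<3" "s'<p" for a b c s a' b' c' s'
  proof (cases "Eg (a=a') (b=b') (c=c') (s=s')")
    case True
    then have "?R (enc p a b c s) (enc p a' b' c' s')" using that enc_lt Gr_enc by simp
    then show ?thesis by blast
  next
    case False
    then show ?thesis using that by simp
  qed
  fix i j assume i: "i < 12*p" and j: "j < 12*p"
  define a where "a = i div p div 3 div 2"
  define b where "b = i div p div 3 mod 2"
  define c where "c = i div p mod 3"
  define s where "s = i mod p"
  define a' where "a' = j div p div 3 div 2"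
  define b' where "b' = j div p div 3 mod 2"
  define c' where "c' = j div p mod 3"
  define s' where "s' = j mod p"
  have ix: "i div p < 12" using i by (simp add: less_mult_imp_div_less mult.commute)
  have jx: "j div p < 12" using j by (simp add: less_mult_imp_div_less mult.commute)
  have ia: "a < 2" using ix unfolding a_def by (simp add: div_less_iff_less_mult)
  have ja: "a' < 2" using jx unfolding a'_def by (simp add: div_less_iff_less_mult)
  have bnd: "b<2" "c<3" "s<p" "b'<2" "c'<3" "s'<p" using p by (auto simp: b_def c_def s_def b'_def c'_def s'_def)
  have ie: "i = enc p a b c s" unfolding a_def b_def c_def s_def using dec_enc[OF p] by simp
  have je: "j = enc p a' b' c' s'" unfolding a'_def b'_def c'_def s'_def using dec_enc[OF p] by simp
  have "?R\<^sup>*\<^sup>* (enc p a b c s) (enc p a b c s')"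
    by (rule step) (use ia bnd in \<open>auto simp: Eg_def\<close>)
  also have "?R\<^sup>*\<^sup>* (enc p a b c s') (enc p a b c' s')"
    by (rule step) (use ia bnd in \<open>auto simp: Eg_def\<close>)
  also have "?R\<^sup>*\<^sup>* (enc p a b c' s') (enc p a b' c' s')"
    by (rule step) (use ia bnd in \<open>auto simp: Eg_def\<close>)
  also have "?R\<^sup>*\<^sup>* (enc p a b' c' s') (enc p a' b' c' s')"
    by (rule step) (use ia ja bnd in \<open>auto simp: Eg_def\<close>)
  finally show "?R\<^sup>*\<^sup>* i j" using ie je by simp
qed

theorem corollary3p4:
  fixes p :: nat
  assumes "p > 2"
  shows "\<exists>E. simple_graph (12 * p) E \<and> connected_graph (12 * p) E
            \<and> regular_graph (12 * p) E (7 * p - 3) \<and> integral_graph (12 * p) E"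
  using Gr_simple Gr_connected Gr_regular Gr_integral assms
  by (metis zero_less_numeral less_trans)

end
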